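(* Let $G$ be a finite digraph without sources that has a good quasi-kernel. Then $G$ has a quasi-kernel with at most $|V(G)|/2$ vertices.
   Context: Digraphs are finite, without loops and without multiple edges in the same direction; anti-parallel edges are allowed. For $V'\subseteq V(G)$, $\Gamma^+(V')$ is the set of out-neighbours of vertices of $V'$, $\Gamma^+_2(V')=V'\cup\Gamma^+(V')\cup\Gamma^+(\Gamma^+(V'))$. A source is a vertex of in-degree $0$. A quasi-kernel is an independent set $Q$ with $\Gamma^+_2(Q)=V(G)$. A quasi-kernel $Q$ is good if $Q\subseteq\Gamma^+(\Gamma^+(Q))$. *)

theory Defs
  imports Main
begin

definition digraph :: "'a set \<Rightarrow> ('a \<times> 'a) set \<Rightarrow> bool" where
  "digraph V E \<longleftrightarrow> E \<subseteq> V \<times> V \<and> (\<forall>v. (v, v) \<notin> E)"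

definition out_nbrs :: "('a \<times> 'a) set \<Rightarrow> 'a set \<Rightarrow> 'a set" where
  "out_nbrs E S = {w. \<exists>v\<in>S. (v, w) \<in> E}"

definition out_nbrs2 :: "('a \<times> 'a) set \<Rightarrow> 'a set \<Rightarrow> 'a set" where
  "out_nbrs2 E S = S \<union> out_nbrs E S \<union> out_nbrs E (out_nbrs E S)"

definition is_source :: "'a set \<Rightarrow> ('a \<times> 'a) set \<Rightarrow> 'a \<Rightarrow> bool" where
  "is_source V E v \<longleftrightarrow> v \<in> V \<and> (\<forall>u\<in>V. (u, v) \<notin> E)"

definition independent :: "('a \<times> 'a) set \<Rightarrow> 'a set \<Rightarrow> bool" where
  "independent E S \<longleftrightarrow> (\<forall>u\<in>S. \<forall>v\<in>S. (u, v) \<notin> E)"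

definition quasi_kernel :: "'a set \<Rightarrow> ('a \<times> 'a) set \<Rightarrow> 'a set \<Rightarrow> bool" where
  "quasi_kernel V E Q \<longleftrightarrow> Q \<subseteq> V \<and> independent E Q \<and> out_nbrs2 E Q = V"

definition good_quasi_kernel :: "'a set \<Rightarrow> ('a \<times> 'a) set \<Rightarrow> 'a set \<Rightarrow> bool" where
  "good_quasi_kernel V E Q \<longleftrightarrow> quasi_kernel V E Q \<and> Q \<subseteq> out_nbrs E (out_nbrs E Q)"

end

theory Submission
  imports Defs
begin

lemma out_nbrs_mono: "A \<subseteq> B \<Longrightarrow> out_nbrs E A \<subseteq> out_nbrs E B"
  unfolding out_nbrs_def by blast

theorem mainTheorem3:
  fixes V :: "'a set" and E :: "('a \<times> 'a) set"
  assumes "finite V"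
    and "digraph V E"
    and "\<forall>v\<in>V. \<not> is_source V E v"
    and "\<exists>Q. good_quasi_kernel V E Q"
  shows "\<exists>Q. quasi_kernel V E Q \<and> 2 * card Q \<le> card V"
proof -
  obtain Q where gQ: "good_quasi_kernel V E Q" using assms(4) by blast
  have QV: "Q \<subseteq> V" and indQ: "independent E Q" and cov: "out_nbrs2 E Q = V"
    and good: "Q \<subseteq> out_nbrs E (out_nbrs E Q)"
    using gQ unfolding good_quasi_kernel_def quasi_kernel_def by auto
  have EV: "E \<subseteq> V \<times> V" using assms(2) unfolding digraph_def by auto
  have finQ: "finite Q" using QV assms(1) finite_subset by blast
  let ?N = "out_nbrs E Q"
  have NV: "?N \<subseteq> V - Q"
    using EV indQ unfolding out_nbrs_def independent_def by blast
  show ?thesis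
  proof (cases "2 * card Q \<le> card V")
    case True
    then show ?thesis using gQ unfolding good_quasi_kernel_def by blast
  next
    case False
    let ?P = "\<lambda>S. S \<subseteq> Q \<and> out_nbrs E S = ?N"
    have "?P Q" by simp
    then obtain S where PS: "?P S" and minS: "\<And>T. ?P T \<Longrightarrow> card S \<le> card T"
      using ex_has_least_nat[of ?P Q card] by blast
    have SQ: "S \<subseteq> Q" and SN: "out_nbrs E S = ?N" using PS by auto
    have finS: "finite S" using SQ finQ finite_subset by blast
    have priv: "\<exists>w. (q, w) \<in> E \<and> w \<notin> out_nbrs E (S - {q})" if qS: "q \<in> S" for q
    proof (rule ccontr)
      assume "\<not> ?thesis"
      hence "out_nbrs E S \<subseteq> out_nbrs E (S - {q})"
        unfolding out_nbrs_def by blast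
      hence "out_nbrs E (S - {q}) = ?N" using SN out_nbrs_mono[of "S - {q}" S E] by blast
      hence "card S \<le> card (S - {q})" using minS SQ by blast
      moreover have "card (S - {q}) < card S" by (rule card_Diff1_less[OF finS qS])
      ultimately show False by simp
    qed
    define p where "p q = (SOME w. (q, w) \<in> E \<and> w \<notin> out_nbrs E (S - {q}))" for q
    have pp: "(q, p q) \<in> E \<and> p q \<notin> out_nbrs E (S - {q})" if "q \<in> S" for q
      using someI_ex[OF priv[OF that]] unfolding p_def by blast
    have inj: "inj_on p S"
    proof (rule inj_onI)
      fix x y assume xS: "x \<in> S" and yS: "y \<in> S" and eq: "p x = p y"
      show "x = y"
      proof (rule ccontr)
        assume "x \<noteq> y"
        hence "x \<in> S - {y}" using xS by blast
        hence "p x \<in> out_nbrs E (S - {y})" using pp[OF xS] unfolding out_nbrs_def by blast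
        thus False using pp[OF yS] eq by simp
      qed
    qed
    have pimg: "p ` S \<subseteq> ?N" using pp SN unfolding out_nbrs_def by blast
    have finN: "finite ?N" using NV assms(1) finite_subset by blast
    have "card S \<le> card ?N" using card_inj_on_le[OF inj pimg finN] .
    also have "\<dots> \<le> card (V - Q)" using NV assms(1) by (simp add: card_mono)
    also have "\<dots> = card V - card Q" using QV finQ by (simp add: card_Diff_subset)
    finally have cS: "card S \<le> card V - card Q" .
    have qk: "quasi_kernel V E S"
      unfolding quasi_kernel_def
    proof (intro conjI)
      show "S \<subseteq> V" using SQ QV by blast
      show "independent E S" using indQ SQ unfolding independent_def by blast
      show "out_nbrs2 E S = V"
      proof
        have "out_nbrs E S \<subseteq> V" "out_nbrs E (out_nbrs E S) \<subseteq> V"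
          using EV unfolding out_nbrs_def by blast+
        thus "out_nbrs2 E S \<subseteq> V"
          using SQ QV unfolding out_nbrs2_def by blast
        have "V = Q \<union> ?N \<union> out_nbrs E ?N" using cov unfolding out_nbrs2_def by simp
        thus "V \<subseteq> out_nbrs2 E S"
          using good unfolding out_nbrs2_def SN by blast
      qed
    qed
    have "2 * card S \<le> card V" using cS False by linarith
    thus ?thesis using qk by blast
  qed
qed

end
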